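(* Let $\gamma$ be a cover-preserving join-congruence of the square grid $G$ such that $(c_{i-1},c_i)\notin\gamma$ and $(d_{i-1},d_i)\notin\gamma$ for all $i\in\{1,\dots,n\}$. Then $\gamma=\bigvee_{B}\mathrm{con}(B)$, where $B$ ranges over the source cells of $\gamma$, $\mathrm{con}(B)$ is the smallest join-congruence of $G$ collapsing the two upper edges of $B$, and the join is taken in the lattice of join-congruences of $(G;\vee)$.
   Context: $G$ is the direct product of chains $0=c_0\prec\dots\prec c_n$ and $0=d_0\prec\dots\prec d_n$, its elements written uniquely as $c_i\vee d_j$. A join-congruence is an equivalence relation compatible with $\vee$; it is cover-preserving if it is the kernel of a join-homomorphism $\varphi$ with $x\prec y\Rightarrow\varphi(x)\preceq\varphi(y)$. For $i,j\ge1$ the 4-cell with top $c_i\vee d_j$ is $B=\{c_{i-1}\vee d_{j-1},c_{i-1}\vee d_j,c_i\vee d_{j-1},c_i\vee d_j\}$, with upper edges $[c_{i-1}\vee d_j,c_i\vee d_j]$ and $[c_i\vee d_{j-1},c_i\vee d_j]$; $B$ is a source cell of $\gamma$ if $c_{i-1}\vee d_j$, $c_i\vee d_{j-1}$, $c_i\vee d_j$ lie in one $\gamma$-class not containing $c_{i-1}\vee d_{j-1}$. *)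

theory Defs
  imports Main
begin

text \<open>The grid G = chain {0..n} x chain {0..n}; the pair (i,j) stands for c_i join d_j.\<close>

definition grid :: "nat \<Rightarrow> (nat \<times> nat) set" where
  "grid n = {0..n} \<times> {0..n}"

definition gjoin :: "nat \<times> nat \<Rightarrow> nat \<times> nat \<Rightarrow> nat \<times> nat" where
  "gjoin x y = (max (fst x) (fst y), max (snd x) (snd y))"

definition gle :: "nat \<times> nat \<Rightarrow> nat \<times> nat \<Rightarrow> bool" where
  "gle x y \<longleftrightarrow> gjoin x y = y"

definition gcover :: "nat \<Rightarrow> nat \<times> nat \<Rightarrow> nat \<times> nat \<Rightarrow> bool" where
  "gcover n x y \<longleftrightarrow> x \<in> grid n \<and> y \<in> grid n \<and> gle x y \<and> x \<noteq> y \<and>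
     \<not> (\<exists>z \<in> grid n. gle x z \<and> gle z y \<and> z \<noteq> x \<and> z \<noteq> y)"

definition scover :: "'b::semilattice_sup \<Rightarrow> 'b \<Rightarrow> bool" where
  "scover a b \<longleftrightarrow> a < b \<and> \<not> (\<exists>z. a < z \<and> z < b)"

definition join_cong :: "nat \<Rightarrow> ((nat \<times> nat) \<times> (nat \<times> nat)) set \<Rightarrow> bool" where
  "join_cong n \<theta> \<longleftrightarrow> equiv (grid n) \<theta> \<and>
     (\<forall>x y z. (x, y) \<in> \<theta> \<longrightarrow> z \<in> grid n \<longrightarrow> (gjoin x z, gjoin y z) \<in> \<theta>)"

definition jcong_gen :: "nat \<Rightarrow> ((nat \<times> nat) \<times> (nat \<times> nat)) set \<Rightarrow> ((nat \<times> nat) \<times> (nat \<times> nat)) set" where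
  "jcong_gen n R = \<Inter> {\<theta>. join_cong n \<theta> \<and> R \<subseteq> \<theta>}"

definition cover_preserving_hom :: "nat \<Rightarrow> (nat \<times> nat \<Rightarrow> 'b::semilattice_sup) \<Rightarrow> bool" where
  "cover_preserving_hom n \<phi> \<longleftrightarrow>
     (\<forall>x \<in> grid n. \<forall>y \<in> grid n. \<phi> (gjoin x y) = sup (\<phi> x) (\<phi> y)) \<and>
     (\<forall>x y. gcover n x y \<longrightarrow> \<phi> x = \<phi> y \<or> scover (\<phi> x) (\<phi> y))"

definition kernel_on :: "nat \<Rightarrow> (nat \<times> nat \<Rightarrow> 'b) \<Rightarrow> ((nat \<times> nat) \<times> (nat \<times> nat)) set" where
  "kernel_on n \<phi> = {(x, y). x \<in> grid n \<and> y \<in> grid n \<and> \<phi> x = \<phi> y}"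

text \<open>the 4-cell with top (i,j) is a source cell of gamma\<close>
definition source_cell :: "nat \<Rightarrow> ((nat \<times> nat) \<times> (nat \<times> nat)) set \<Rightarrow> nat \<Rightarrow> nat \<Rightarrow> bool" where
  "source_cell n \<gamma> i j \<longleftrightarrow> 1 \<le> i \<and> i \<le> n \<and> 1 \<le> j \<and> j \<le> n \<and>
     ((i - 1, j), (i, j)) \<in> \<gamma> \<and> ((i, j - 1), (i, j)) \<in> \<gamma> \<and>
     ((i - 1, j - 1), (i, j)) \<notin> \<gamma>"

definition con_cell :: "nat \<Rightarrow> nat \<Rightarrow> nat \<Rightarrow> ((nat \<times> nat) \<times> (nat \<times> nat)) set" where
  "con_cell n i j = jcong_gen n {((i - 1, j), (i, j)), ((i, j - 1), (i, j))}"

end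

theory Submission
  imports Defs
begin

lemma grid_mem[simp]: "(a,b) \<in> grid n \<longleftrightarrow> a \<le> n \<and> b \<le> n"
  by (auto simp: grid_def)

lemma gjoin_simp[simp]: "gjoin (a,b) (c,d) = (max a c, max b d)"
  by (simp add: gjoin_def)

lemma cover_h: "1 \<le> i \<Longrightarrow> i \<le> n \<Longrightarrow> j \<le> n \<Longrightarrow> gcover n (i-1,j) (i,j)"
  unfolding gcover_def gle_def by auto

lemma cover_v: "1 \<le> j \<Longrightarrow> j \<le> n \<Longrightarrow> i \<le> n \<Longrightarrow> gcover n (i,j-1) (i,j)"
  unfolding gcover_def gle_def by auto

lemma eq_sup_iff1: "((b::'a::semilattice_sup) = sup a b) \<longleftrightarrow> a \<le> b"
  by (metis sup.absorb_iff2)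
lemma eq_sup_iff2: "((a::'a::semilattice_sup) = sup a b) \<longleftrightarrow> b \<le> a"
  by (metis sup.absorb_iff1)

theorem lemma4p7:
  fixes n :: nat
    and \<gamma> :: "((nat \<times> nat) \<times> (nat \<times> nat)) set"
    and \<phi> :: "nat \<times> nat \<Rightarrow> 'b::semilattice_sup"
  assumes "join_cong n \<gamma>"
    and "cover_preserving_hom n \<phi>"
    and "\<gamma> = kernel_on n \<phi>"
    and "\<And>i. 1 \<le> i \<Longrightarrow> i \<le> n \<Longrightarrow> ((i - 1, 0), (i, 0)) \<notin> \<gamma>"
    and "\<And>i. 1 \<le> i \<Longrightarrow> i \<le> n \<Longrightarrow> ((0, i - 1), (0, i)) \<notin> \<gamma>"
  shows "\<gamma> = jcong_gen n (\<Union> {con_cell n i j | i j. source_cell n \<gamma> i j})"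
proof -
  define U where "U = \<Union> {con_cell n i j | i j. source_cell n \<gamma> i j}"
  have J: "\<And>x y. x \<in> grid n \<Longrightarrow> y \<in> grid n \<Longrightarrow> \<phi> (gjoin x y) = sup (\<phi> x) (\<phi> y)"
    using assms(2) unfolding cover_preserving_hom_def by blast
  have C: "\<And>x y. gcover n x y \<Longrightarrow> \<phi> x = \<phi> y \<or> scover (\<phi> x) (\<phi> y)"
    using assms(2) unfolding cover_preserving_hom_def by blast
  have G: "\<And>x y. (x,y) \<in> \<gamma> \<longleftrightarrow> x \<in> grid n \<and> y \<in> grid n \<and> \<phi> x = \<phi> y"
    using assms(3) unfolding kernel_on_def by auto
  have gen: "\<And>R. R \<subseteq> jcong_gen n R" unfolding jcong_gen_def by blast
  have sub1: "jcong_gen n U \<subseteq> \<gamma>"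
  proof -
    have "U \<subseteq> \<gamma>"
    proof
      fix p assume "p \<in> U"
      then obtain i j where s: "source_cell n \<gamma> i j" and p: "p \<in> con_cell n i j"
        unfolding U_def by blast
      have "{((i - 1, j), (i, j)), ((i, j - 1), (i, j))} \<subseteq> \<gamma>"
        using s unfolding source_cell_def by auto
      then show "p \<in> \<gamma>" using p assms(1) unfolding con_cell_def jcong_gen_def by blast
    qed
    then show ?thesis using assms(1) unfolding jcong_gen_def by blast
  qed
  have sub2: "\<gamma> \<subseteq> jcong_gen n U"
    unfolding jcong_gen_def
  proof (rule Inter_greatest)
    fix \<theta> assume "\<theta> \<in> {\<theta>. join_cong n \<theta> \<and> U \<subseteq> \<theta>}"
    then have jc: "join_cong n \<theta>" and Uth: "U \<subseteq> \<theta>" by auto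
    have eq: "equiv (grid n) \<theta>" using jc unfolding join_cong_def by blast
    have cj: "\<And>x y z. (x,y)\<in>\<theta> \<Longrightarrow> z\<in>grid n \<Longrightarrow> (gjoin x z, gjoin y z) \<in> \<theta>"
      using jc unfolding join_cong_def by blast
    have sy: "sym \<theta>" and tr: "trans \<theta>" and rf: "refl_on (grid n) \<theta>" using eq by (auto elim: equivE)
    have src: "((i-1,j),(i,j)) \<in> \<theta> \<and> ((i,j-1),(i,j)) \<in> \<theta>" if "source_cell n \<gamma> i j" for i j
    proof -
      have "con_cell n i j \<subseteq> U" using that unfolding U_def by blast
      moreover have "{((i - 1, j), (i, j)), ((i, j - 1), (i, j))} \<subseteq> con_cell n i j"
        unfolding con_cell_def by (rule gen)
      ultimately show ?thesis using Uth by blast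
    qed
    have H: "\<And>i. 1\<le>i \<Longrightarrow> i\<le>n \<Longrightarrow> j \<le> n \<Longrightarrow> \<phi> (i-1,j) = \<phi> (i,j) \<Longrightarrow> ((i-1,j),(i,j)) \<in> \<theta>" for j
    proof (induction j)
      case 0
      then show ?case using assms(4)[of i] G by auto
    next
      case (Suc j i)
      let ?a = "(i-1,j)" and ?b = "(i,j)" and ?c = "(i-1,Suc j)" and ?d = "(i,Suc j)"
      have ab: "\<phi> ?a \<le> \<phi> ?b" using J[of ?a ?b] Suc.prems by (simp add: max_def eq_sup_iff1 eq_sup_iff2)
      have bd: "\<phi> ?b \<le> \<phi> ?d" using J[of ?b ?d] Suc.prems by (simp add: max_def eq_sup_iff1 eq_sup_iff2)
      have ac: "\<phi> ?a \<le> \<phi> ?c" using J[of ?a ?c] Suc.prems by (simp add: max_def eq_sup_iff1 eq_sup_iff2)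
      have gg: "gjoin ?b ?c = ?d" by (auto simp: max_def)
      have dbc: "\<phi> ?d = sup (\<phi> ?b) (\<phi> ?c)" using J[of ?b ?c] Suc.prems gg by simp
      show ?case
      proof (cases "\<phi> ?a = \<phi> ?b")
        case True
        then have "(?a,?b) \<in> \<theta>" using Suc by auto
        moreover have "gjoin ?a ?c = ?c" by (auto simp: max_def)
        ultimately show ?thesis using cj[of ?a ?b ?c] Suc.prems gg by auto
      next
        case False
        have cab: "\<phi> ?a < \<phi> ?b" using False ab by auto
        show ?thesis
        proof (cases "\<phi> ?b = \<phi> ?d")
          case True
          have "source_cell n \<gamma> i (Suc j)" unfolding source_cell_def
            using Suc.prems True False G by auto
          then show ?thesis using src by auto
        next
          case F2: False
          have "\<phi> ?b < \<phi> ?d" using F2 bd by auto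
          moreover have "\<phi> ?d = \<phi> ?c" using dbc Suc.prems by (simp add: sup.absorb2)
          ultimately have "\<phi> ?a < \<phi> ?b" "\<phi> ?b < \<phi> ?c" using cab by auto
          moreover have "\<phi> ?a = \<phi> ?c \<or> scover (\<phi> ?a) (\<phi> ?c)"
            proof -
              have "gcover n ?a ?c" using cover_v[of "Suc j" n "i-1"] Suc.prems by simp
              then show ?thesis using C by blast
            qed
          ultimately show ?thesis unfolding scover_def by auto
        qed
      qed
    qed
    have V: "\<And>j. 1\<le>j \<Longrightarrow> j\<le>n \<Longrightarrow> i \<le> n \<Longrightarrow> \<phi> (i,j-1) = \<phi> (i,j) \<Longrightarrow> ((i,j-1),(i,j)) \<in> \<theta>" for i
    proof (induction i)
      case 0
      then show ?case using assms(5)[of j] G by auto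
    next
      case (Suc i j)
      let ?a = "(i,j-1)" and ?b = "(i,j)" and ?c = "(Suc i,j-1)" and ?d = "(Suc i,j)"
      have ab: "\<phi> ?a \<le> \<phi> ?b" using J[of ?a ?b] Suc.prems by (simp add: max_def eq_sup_iff1 eq_sup_iff2)
      have bd: "\<phi> ?b \<le> \<phi> ?d" using J[of ?b ?d] Suc.prems by (simp add: max_def eq_sup_iff1 eq_sup_iff2)
      have ac: "\<phi> ?a \<le> \<phi> ?c" using J[of ?a ?c] Suc.prems by (simp add: max_def eq_sup_iff1 eq_sup_iff2)
      have gg: "gjoin ?b ?c = ?d" by (auto simp: max_def)
      have dbc: "\<phi> ?d = sup (\<phi> ?b) (\<phi> ?c)" using J[of ?b ?c] Suc.prems gg by simp
      show ?case
      proof (cases "\<phi> ?a = \<phi> ?b")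
        case True
        then have "(?a,?b) \<in> \<theta>" using Suc by auto
        moreover have "gjoin ?a ?c = ?c" by (auto simp: max_def)
        ultimately show ?thesis using cj[of ?a ?b ?c] Suc.prems gg by auto
      next
        case False
        have cab: "\<phi> ?a < \<phi> ?b" using False ab by auto
        show ?thesis
        proof (cases "\<phi> ?b = \<phi> ?d")
          case True
          have "source_cell n \<gamma> (Suc i) j" unfolding source_cell_def
            using Suc.prems True False G by auto
          then show ?thesis using src by auto
        next
          case F2: False
          have "\<phi> ?b < \<phi> ?d" using F2 bd by auto
          moreover have "\<phi> ?d = \<phi> ?c" using dbc Suc.prems by (simp add: sup.absorb2)
          ultimately have "\<phi> ?a < \<phi> ?b" "\<phi> ?b < \<phi> ?c" using cab by auto
          moreover have "\<phi> ?a = \<phi> ?c \<or> scover (\<phi> ?a) (\<phi> ?c)"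
            proof -
              have "gcover n ?a ?c" using cover_h[of "Suc i" n "j-1"] Suc.prems by simp
              then show ?thesis using C by blast
            qed
          ultimately show ?thesis unfolding scover_def by auto
        qed
      qed
    qed
    have M: "\<And>a b c d. (c - a) + (d - b) = k \<Longrightarrow> a \<le> c \<Longrightarrow> c \<le> n \<Longrightarrow> b \<le> d \<Longrightarrow> d \<le> n
       \<Longrightarrow> \<phi> (a,b) = \<phi> (c,d) \<Longrightarrow> ((a,b),(c,d)) \<in> \<theta>" for k
    proof (induction k)
      case 0
      then have "a = c" "b = d" by auto
      moreover have "(c,d) \<in> grid n" using 0 by simp
      ultimately show ?case using refl_onD[OF rf] by auto
    next
      case (Suc k a b c d)
      show ?case
      proof (cases "a < c")
        case True
        have 1: "\<phi> (a,b) \<le> \<phi> (a+1,b)" using J[of "(a,b)" "(a+1,b)"] Suc.prems True by (simp add: max_def eq_sup_iff1 eq_sup_iff2)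
        have 2: "\<phi> (a+1,b) \<le> \<phi> (c,d)" using J[of "(a+1,b)" "(c,d)"] Suc.prems True by (simp add: max_def eq_sup_iff1 eq_sup_iff2)
        have e: "\<phi> (a+1,b) = \<phi> (c,d)" using 1 2 Suc.prems by auto
        have "((a+1,b),(c,d)) \<in> \<theta>" by (rule Suc.IH) (use Suc.prems True e in auto)
        moreover have "((a+1-1,b),(a+1,b)) \<in> \<theta>" using H[of "a+1" b] Suc.prems True e by auto
        ultimately show ?thesis using tr by (auto dest: transD)
      next
        case False
        then have T: "b < d" using Suc.prems by auto
        have 1: "\<phi> (a,b) \<le> \<phi> (a,b+1)" using J[of "(a,b)" "(a,b+1)"] Suc.prems T by (simp add: max_def eq_sup_iff1 eq_sup_iff2)
        have 2: "\<phi> (a,b+1) \<le> \<phi> (c,d)" using J[of "(a,b+1)" "(c,d)"] Suc.prems T by (simp add: max_def eq_sup_iff1 eq_sup_iff2)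
        have e: "\<phi> (a,b+1) = \<phi> (c,d)" using 1 2 Suc.prems by auto
        have "((a,b+1),(c,d)) \<in> \<theta>" by (rule Suc.IH) (use Suc.prems T e in auto)
        moreover have "((a,b+1-1),(a,b+1)) \<in> \<theta>" using V[of "b+1" a] Suc.prems T e by auto
        ultimately show ?thesis using tr by (auto dest: transD)
      qed
    qed
    show "\<gamma> \<subseteq> \<theta>"
    proof
      fix p assume p: "p \<in> \<gamma>"
      obtain a b c d where pe: "p = ((a,b),(c,d))" by (metis prod.exhaust)
      have g: "a \<le> n" "b \<le> n" "c \<le> n" "d \<le> n" "\<phi> (a,b) = \<phi> (c,d)" using p pe G by auto
      have z: "\<phi> (max a c, max b d) = \<phi> (a,b)" using J[of "(a,b)" "(c,d)"] g by simp
      have "((a,b),(max a c, max b d)) \<in> \<theta>" using M g z by simp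
      moreover have "((c,d),(max a c, max b d)) \<in> \<theta>" using M g z by simp
      ultimately show "p \<in> \<theta>" using pe sy tr by (meson symD transD)
    qed
  qed
  show ?thesis using sub1 sub2 unfolding U_def by blast
qed

end
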